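(* Let $R_0$ be a commutative Noetherian ring in which $2$ is a unit. Let $R_0[\mathbb Q]=R_0[a_{ij},\ell_{ij}\ (1\le i\le 2,1\le j\le 3),\psi_{12},\psi_{13},\psi_{23},z_1,z_2]$ be a polynomial ring in these $17$ indeterminates and let $\mathbb Q$ be the complex over $R_0[\mathbb Q]$ described below. Let $R_0[\mathbb M]=R_0[x_{ij},y_{ij}\ (1\le i<j\le 4),\ z_{ijk}\ (1\le i<j<k\le 4),\ t]$ be a polynomial ring in these $17$ indeterminates and let $\mathbb M$ be the complex over $R_0[\mathbb M]$ described below. Then there is a surjective $R_0$-algebra homomorphism $\mu:R_0[\mathbb Q]\to R_0[\mathbb M]$ such that the complexes $\mathbb Q\otimes_{R_0[\mathbb Q]}R_0[\mathbb M]$ and $\mathbb M$ are isomorphic.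
   Context: The complex $\mathbb Q$: $0\to R^2\xrightarrow{q_3}R^6\xrightarrow{q_2}R^5\xrightarrow{q_1}R$ (with $R=R_0[\mathbb Q]$). Write $A=(a_{ij})$, $L=(\ell_{ij})$ ($2\times 3$), $P=(\psi_{23},-\psi_{13},\psi_{12})^{\rm T}$, $N=\sum_{i=1}^3(a_{1i}\ell_{2i}-a_{2i}\ell_{1i})$. $q_1=[g_1\ g_2\ g_3\ g_4\ g_5]$ with $g_1=-\det\begin{bmatrix}\psi_{23}&-\psi_{13}&\psi_{12}\\ \ell_{11}&\ell_{12}&\ell_{13}\\ \ell_{21}&\ell_{22}&\ell_{23}\end{bmatrix}-z_2N-z_2z_1$, $g_2=P^{\rm T}A^{\rm T}\begin{bmatrix}\ell_{21}\\-\ell_{11}\end{bmatrix}-z_2(a_{12}a_{23}-a_{13}a_{22})+z_1\psi_{23}$, $g_3=P^{\rm T}A^{\rm T}\begin{bmatrix}\ell_{22}\\-\ell_{12}\end{bmatrix}+z_2(a_{11}a_{23}-a_{13}a_{21})-z_1\psi_{13}$, $g_4=P^{\rm T}A^{\rm T}\begin{bmatrix}\ell_{23}\\-\ell_{13}\end{bmatrix}-z_2(a_{11}a_{22}-a_{12}a_{21})+z_1\psi_{12}$, $g_5=-\det(AL^{\rm T})-z_1N-z_1^2$. $q_2$ ($5\times6$) has columns (rows 1 to 5): $C_1=(\psi_{12}a_{23}-\psi_{13}a_{22}+\psi_{23}a_{21},\ -\ell_{22}\psi_{12}-\ell_{23}\psi_{13}+z_2a_{21},\ \ell_{21}\psi_{12}-\ell_{23}\psi_{23}+z_2a_{22},\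 \ell_{21}\psi_{13}+\ell_{22}\psi_{23}+z_2a_{23},\ 0)$; $C_2=(-\psi_{12}a_{13}+\psi_{13}a_{12}-\psi_{23}a_{11},\ \psi_{12}\ell_{12}+\psi_{13}\ell_{13}-z_2a_{11},\ -\psi_{12}\ell_{11}+\psi_{23}\ell_{13}-z_2a_{12},\ -\psi_{13}\ell_{11}-\psi_{23}\ell_{12}-z_2a_{13},\ 0)$; $C_3=(z_1,\ \ell_{12}\ell_{23}-\ell_{13}\ell_{22},\ -(\ell_{11}\ell_{23}-\ell_{13}\ell_{21}),\ \ell_{11}\ell_{22}-\ell_{12}\ell_{21},\ -z_2)$; $C_4=(a_{12}a_{23}-a_{13}a_{22},\ -(a_{12}\ell_{22}-a_{22}\ell_{12})-(a_{13}\ell_{23}-a_{23}\ell_{13})-z_1,\ a_{12}\ell_{21}-a_{22}\ell_{11},\ a_{13}\ell_{21}-a_{23}\ell_{11},\ -\psi_{23})$; $C_5=(-(a_{11}a_{23}-a_{13}a_{21}),\ a_{11}\ell_{22}-a_{21}\ell_{12},\ -(a_{11}\ell_{21}-a_{21}\ell_{11})-(a_{13}\ell_{23}-a_{23}\ell_{13})-z_1,\ a_{13}\ell_{22}-a_{23}\ell_{12},\ \psi_{13})$; $C_6=(a_{11}a_{22}-a_{12}a_{21},\ a_{11}\ell_{23}-a_{21}\ell_{13},\ a_{12}\ell_{23}-a_{22}\ell_{13},\ -(a_{11}\ell_{21}-a_{21}\ell_{11})-(a_{12}\ell_{22}-a_{22}\ell_{12})-z_1,\ -\psi_{12})$. $q_3$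 ($6\times2$), rows (column 1; column 2): $(a_{11}\ell_{11}+a_{12}\ell_{12}+a_{13}\ell_{13};\ a_{11}\ell_{21}+a_{12}\ell_{22}+a_{13}\ell_{23}+z_1)$, $(a_{21}\ell_{11}+a_{22}\ell_{12}+a_{23}\ell_{13}-z_1;\ a_{21}\ell_{21}+a_{22}\ell_{22}+a_{23}\ell_{23})$, $(-a_{11}\psi_{23}+a_{12}\psi_{13}-a_{13}\psi_{12};\ -a_{21}\psi_{23}+a_{22}\psi_{13}-a_{23}\psi_{12})$, $(-\ell_{12}\psi_{12}-\ell_{13}\psi_{13}+z_2a_{11};\ -\ell_{22}\psi_{12}-\ell_{23}\psi_{13}+z_2a_{21})$, $(\ell_{11}\psi_{12}-\ell_{13}\psi_{23}+z_2a_{12};\ \ell_{21}\psi_{12}-\ell_{23}\psi_{23}+z_2a_{22})$, $(\ell_{11}\psi_{13}+\ell_{12}\psi_{23}+z_2a_{13};\ \ell_{21}\psi_{13}+\ell_{22}\psi_{23}+z_2a_{23})$. The complex $\mathbb M$: $0\to R^2\xrightarrow{m_3}R^6\xrightarrow{m_2}R^5\xrightarrow{m_1}R$ (with $R=R_0[\mathbb M]$). Put $D(ij,kl)=x_{ij}y_{kl}-x_{kl}y_{ij}$, $a=x_{12}x_{34}-x_{13}x_{24}+x_{14}x_{23}$, $b=x_{12}y_{34}-x_{13}y_{24}+x_{14}y_{23}+y_{12}x_{34}-y_{13}x_{24}+y_{14}x_{23}$, $c=y_{12}y_{34}-y_{13}y_{24}+y_{14}y_{23}$, $u=b^2-4ac$,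 $u_{123}=-2z_{234}D(12,13)+2z_{134}D(12,23)-2z_{124}D(13,23)+z_{123}(D(13,24)-D(12,34)+D(14,23))$, $u_{124}=2z_{234}D(12,14)-2z_{134}D(12,24)+z_{124}(D(12,34)+D(13,24)+D(14,23))-2z_{123}D(14,24)$, $u_{134}=2z_{234}D(13,14)+z_{134}(-D(12,34)-D(13,24)+D(14,23))+2z_{124}D(13,34)-2z_{123}D(14,34)$, $u_{234}=z_{234}(-D(12,34)+D(13,24)-D(14,23))-2z_{134}D(23,24)+2z_{124}D(23,34)-2z_{123}D(24,34)$. $m_1=[-u_{234}+tz_{234},\ -u_{134}+tz_{134},\ -u_{124}+tz_{124},\ -u_{123}-tz_{123},\ -u+t^2]$. $m_2$ ($5\times 6$) has columns (rows 1 to 5): $(-y_{12}z_{134}+y_{13}z_{124}-y_{14}z_{123},\ y_{12}z_{234}-y_{23}z_{124}+y_{24}z_{123},\ -y_{13}z_{234}+y_{23}z_{134}-y_{34}z_{123},\ -y_{14}z_{234}+y_{24}z_{134}-y_{34}z_{124},\ 0)$; $(-x_{12}z_{134}+x_{13}z_{124}-x_{14}z_{123},\ x_{12}z_{234}-x_{23}z_{124}+x_{24}z_{123},\ -x_{13}z_{234}+x_{23}z_{134}-x_{34}z_{123},\ -x_{14}z_{234}+x_{24}z_{134}-x_{34}z_{124},\ 0)$; $(-x_{12}y_{34}+x_{34}y_{12}+x_{13}y_{24}-x_{24}y_{13}-x_{14}y_{23}+x_{23}y_{14}+t,\ -2(x_{23}y_{24}-x_{24}y_{23}),\ 2(x_{23}y_{34}-x_{34}y_{23}),\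 2(x_{24}y_{34}-x_{34}y_{24}),\ -z_{234})$; $(2(x_{13}y_{14}-x_{14}y_{13}),\ -x_{12}y_{34}+x_{34}y_{12}-x_{13}y_{24}+x_{24}y_{13}+x_{14}y_{23}-x_{23}y_{14}+t,\ 2(x_{13}y_{34}-x_{34}y_{13}),\ 2(x_{14}y_{34}-x_{34}y_{14}),\ -z_{134})$; $(-2(x_{12}y_{14}-x_{14}y_{12}),\ 2(x_{12}y_{24}-x_{24}y_{12}),\ -x_{12}y_{34}+x_{34}y_{12}-x_{13}y_{24}+x_{24}y_{13}-x_{14}y_{23}+x_{23}y_{14}-t,\ -2(x_{14}y_{24}-x_{24}y_{14}),\ z_{124})$; $(-2(x_{12}y_{13}-x_{13}y_{12}),\ 2(x_{12}y_{23}-x_{23}y_{12}),\ -2(x_{13}y_{23}-x_{23}y_{13}),\ x_{12}y_{34}-x_{34}y_{12}-x_{13}y_{24}+x_{24}y_{13}-x_{14}y_{23}+x_{23}y_{14}+t,\ z_{123})$. $m_3$ ($6\times2$), rows (column 1; column 2): $(x_{12}y_{34}-x_{13}y_{24}+x_{14}y_{23}+x_{34}y_{12}-x_{24}y_{13}+x_{23}y_{14}+t;\ 2(x_{12}x_{34}-x_{13}x_{24}+x_{14}x_{23}))$, $(-2(y_{12}y_{34}-y_{13}y_{24}+y_{14}y_{23});\ -x_{12}y_{34}+x_{13}y_{24}-x_{14}y_{23}-x_{34}y_{12}+x_{24}y_{13}-x_{23}y_{14}+t)$, $(-(-y_{12}z_{134}+y_{13}z_{124}-y_{14}z_{123});\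 -(-x_{12}z_{134}+x_{13}z_{124}-x_{14}z_{123}))$, $(-y_{12}z_{234}+y_{23}z_{124}-y_{24}z_{123};\ -x_{12}z_{234}+x_{23}z_{124}-x_{24}z_{123})$, $(-y_{13}z_{234}+y_{23}z_{134}-y_{34}z_{123};\ -x_{13}z_{234}+x_{23}z_{134}-x_{34}z_{123})$, $(-(-y_{14}z_{234}+y_{24}z_{134}-y_{34}z_{124});\ -(-x_{14}z_{234}+x_{24}z_{134}-x_{34}z_{124}))$. An isomorphism of complexes means a family of isomorphisms of the modules in each degree commuting with the differentials. *)

theory Defs
  imports "HOL-Library.Poly_Mapping" "Jordan_Normal_Form.Matrix"
begin

definition ring_ideal :: "'a::comm_ring_1 set \<Rightarrow> bool" where
  "ring_ideal I \<longleftrightarrow> 0 \<in> I \<and> (\<forall>x\<in>I. \<forall>y\<in>I. x + y \<in> I) \<and> (\<forall>r. \<forall>x\<in>I. r * x \<in> I)"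

definition noetherian_ring :: "'a::comm_ring_1 itself \<Rightarrow> bool" where
  "noetherian_ring _ \<longleftrightarrow>
     (\<forall>I :: nat \<Rightarrow> 'a set. (\<forall>n. ring_ideal (I n)) \<and> (\<forall>n. I n \<subseteq> I (Suc n))
        \<longrightarrow> (\<exists>N. \<forall>n\<ge>N. I n = I N))"

datatype qvar = A11 | A12 | A13 | A21 | A22 | A23
  | L11 | L12 | L13 | L21 | L22 | L23 | Psi12 | Psi13 | Psi23 | Z1 | Z2

datatype mvar = X12 | X13 | X14 | X23 | X24 | X34
  | Y12 | Y13 | Y14 | Y23 | Y24 | Y34 | Z123 | Z124 | Z134 | Z234 | T

type_synonym ('v, 'a) mpoly = "('v \<Rightarrow>\<^sub>0 nat) \<Rightarrow>\<^sub>0 'a"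

definition PVar :: "'v \<Rightarrow> ('v, 'a::comm_ring_1) mpoly" where
  "PVar v = Poly_Mapping.single (Poly_Mapping.single v 1) 1"

definition PConst :: "'a::comm_ring_1 \<Rightarrow> ('v, 'a) mpoly" where
  "PConst c = Poly_Mapping.single 0 c"

definition R0_alg_hom :: "(('v, 'a::comm_ring_1) mpoly \<Rightarrow> ('w, 'a) mpoly) \<Rightarrow> bool" where
  "R0_alg_hom f \<longleftrightarrow> f 1 = 1 \<and> (\<forall>x y. f (x + y) = f x + f y) \<and> (\<forall>x y. f (x * y) = f x * f y)
     \<and> (\<forall>c. f (PConst c) = PConst c)"

text \<open>Index maps (only used at the valid indices).\<close>
definition qa :: "nat \<Rightarrow> nat \<Rightarrow> qvar" where
  "qa i j = (if i = 1 then (if j = 1 then A11 else if j = 2 then A12 else A13)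
             else (if j = 1 then A21 else if j = 2 then A22 else A23))"
definition ql :: "nat \<Rightarrow> nat \<Rightarrow> qvar" where
  "ql i j = (if i = 1 then (if j = 1 then L11 else if j = 2 then L12 else L13)
             else (if j = 1 then L21 else if j = 2 then L22 else L23))"
definition qpsi :: "nat \<Rightarrow> nat \<Rightarrow> qvar" where
  "qpsi i j = (if (i,j) = (1,2) then Psi12 else if (i,j) = (1,3) then Psi13 else Psi23)"
definition mx :: "nat \<Rightarrow> nat \<Rightarrow> mvar" where
  "mx i j = (if (i,j) = (1,2) then X12 else if (i,j) = (1,3) then X13 else if (i,j) = (1,4) then X14
             else if (i,j) = (2,3) then X23 else if (i,j) = (2,4) then X24 else X34)"
definition my :: "nat \<Rightarrow> nat \<Rightarrow> mvar" where
  "my i j = (if (i,j) = (1,2) then Y12 else if (i,j) = (1,3) then Y13 else if (i,j) = (1,4) then Y14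
             else if (i,j) = (2,3) then Y23 else if (i,j) = (2,4) then Y24 else Y34)"
definition mz :: "nat \<Rightarrow> nat \<Rightarrow> nat \<Rightarrow> mvar" where
  "mz i j k = (if (i,j,k) = (1,2,3) then Z123 else if (i,j,k) = (1,2,4) then Z124
               else if (i,j,k) = (1,3,4) then Z134 else Z234)"

section \<open>The complex Q (generic in the entries)\<close>

definition det3 :: "'r::comm_ring_1 \<Rightarrow> 'r \<Rightarrow> 'r \<Rightarrow> 'r \<Rightarrow> 'r \<Rightarrow> 'r \<Rightarrow> 'r \<Rightarrow> 'r \<Rightarrow> 'r \<Rightarrow> 'r" where
  "det3 a b c d e f g h i = a*(e*i - f*h) - b*(d*i - f*g) + c*(d*h - e*g)"

context
  fixes a l p :: "nat \<Rightarrow> nat \<Rightarrow> 'r::comm_ring_1" and z1 z2 :: 'r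
begin

definition NQ :: 'r where
  "NQ = (\<Sum>i\<in>{1..3}. a 1 i * l 2 i - a 2 i * l 1 i)"

text \<open>P^T A^T [v1; v2] with P = (psi23, -psi13, psi12)^T.\<close>
definition PAv :: "'r \<Rightarrow> 'r \<Rightarrow> 'r" where
  "PAv v1 v2 = p 2 3 * (a 1 1 * v1 + a 2 1 * v2) - p 1 3 * (a 1 2 * v1 + a 2 2 * v2)
               + p 1 2 * (a 1 3 * v1 + a 2 3 * v2)"

definition ALt :: "nat \<Rightarrow> nat \<Rightarrow> 'r" where
  "ALt i k = (\<Sum>j\<in>{1..3}. a i j * l k j)"

definition Qd1 :: "'r mat" where
  "Qd1 = mat_of_rows_list 5 [[
     - det3 (p 2 3) (- p 1 3) (p 1 2) (l 1 1) (l 1 2) (l 1 3) (l 2 1) (l 2 2) (l 2 3) - z2 * NQ - z2 * z1,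
     PAv (l 2 1) (- l 1 1) - z2 * (a 1 2 * a 2 3 - a 1 3 * a 2 2) + z1 * p 2 3,
     PAv (l 2 2) (- l 1 2) + z2 * (a 1 1 * a 2 3 - a 1 3 * a 2 1) - z1 * p 1 3,
     PAv (l 2 3) (- l 1 3) - z2 * (a 1 1 * a 2 2 - a 1 2 * a 2 1) + z1 * p 1 2,
     - (ALt 1 1 * ALt 2 2 - ALt 1 2 * ALt 2 1) - z1 * NQ - z1 ^ 2]]"

definition Qd2 :: "'r mat" where
  "Qd2 = mat_of_cols_list 5 [
     [p 1 2 * a 2 3 - p 1 3 * a 2 2 + p 2 3 * a 2 1,
      - l 2 2 * p 1 2 - l 2 3 * p 1 3 + z2 * a 2 1,
      l 2 1 * p 1 2 - l 2 3 * p 2 3 + z2 * a 2 2,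
      l 2 1 * p 1 3 + l 2 2 * p 2 3 + z2 * a 2 3,
      0],
     [- p 1 2 * a 1 3 + p 1 3 * a 1 2 - p 2 3 * a 1 1,
      p 1 2 * l 1 2 + p 1 3 * l 1 3 - z2 * a 1 1,
      - p 1 2 * l 1 1 + p 2 3 * l 1 3 - z2 * a 1 2,
      - p 1 3 * l 1 1 - p 2 3 * l 1 2 - z2 * a 1 3,
      0],
     [z1,
      l 1 2 * l 2 3 - l 1 3 * l 2 2,
      - (l 1 1 * l 2 3 - l 1 3 * l 2 1),
      l 1 1 * l 2 2 - l 1 2 * l 2 1,
      - z2],
     [a 1 2 * a 2 3 - a 1 3 * a 2 2,
      - (a 1 2 * l 2 2 - a 2 2 * l 1 2) - (a 1 3 * l 2 3 - a 2 3 * l 1 3) - z1,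
      a 1 2 * l 2 1 - a 2 2 * l 1 1,
      a 1 3 * l 2 1 - a 2 3 * l 1 1,
      - p 2 3],
     [- (a 1 1 * a 2 3 - a 1 3 * a 2 1),
      a 1 1 * l 2 2 - a 2 1 * l 1 2,
      - (a 1 1 * l 2 1 - a 2 1 * l 1 1) - (a 1 3 * l 2 3 - a 2 3 * l 1 3) - z1,
      a 1 3 * l 2 2 - a 2 3 * l 1 2,
      p 1 3],
     [a 1 1 * a 2 2 - a 1 2 * a 2 1,
      a 1 1 * l 2 3 - a 2 1 * l 1 3,
      a 1 2 * l 2 3 - a 2 2 * l 1 3,
      - (a 1 1 * l 2 1 - a 2 1 * l 1 1) - (a 1 2 * l 2 2 - a 2 2 * l 1 2) - z1,
      - p 1 2]]"

definition Qd3 :: "'r mat" where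
  "Qd3 = mat_of_rows_list 2 [
     [a 1 1 * l 1 1 + a 1 2 * l 1 2 + a 1 3 * l 1 3,
      a 1 1 * l 2 1 + a 1 2 * l 2 2 + a 1 3 * l 2 3 + z1],
     [a 2 1 * l 1 1 + a 2 2 * l 1 2 + a 2 3 * l 1 3 - z1,
      a 2 1 * l 2 1 + a 2 2 * l 2 2 + a 2 3 * l 2 3],
     [- a 1 1 * p 2 3 + a 1 2 * p 1 3 - a 1 3 * p 1 2,
      - a 2 1 * p 2 3 + a 2 2 * p 1 3 - a 2 3 * p 1 2],
     [- l 1 2 * p 1 2 - l 1 3 * p 1 3 + z2 * a 1 1,
      - l 2 2 * p 1 2 - l 2 3 * p 1 3 + z2 * a 2 1],
     [l 1 1 * p 1 2 - l 1 3 * p 2 3 + z2 * a 1 2,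
      l 2 1 * p 1 2 - l 2 3 * p 2 3 + z2 * a 2 2],
     [l 1 1 * p 1 3 + l 1 2 * p 2 3 + z2 * a 1 3,
      l 2 1 * p 1 3 + l 2 2 * p 2 3 + z2 * a 2 3]]"

end

section \<open>The complex M (generic in the entries)\<close>

context
  fixes x y :: "nat \<Rightarrow> nat \<Rightarrow> 'r::comm_ring_1" and z :: "nat \<Rightarrow> nat \<Rightarrow> nat \<Rightarrow> 'r" and t :: 'r
begin

definition DM :: "nat \<Rightarrow> nat \<Rightarrow> nat \<Rightarrow> nat \<Rightarrow> 'r" where
  "DM i j k m = x i j * y k m - x k m * y i j"

definition Ma :: 'r where "Ma = x 1 2 * x 3 4 - x 1 3 * x 2 4 + x 1 4 * x 2 3"
definition Mb :: 'r where
  "Mb = x 1 2 * y 3 4 - x 1 3 * y 2 4 + x 1 4 * y 2 3 + y 1 2 * x 3 4 - y 1 3 * x 2 4 + y 1 4 * x 2 3"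
definition Mc :: 'r where "Mc = y 1 2 * y 3 4 - y 1 3 * y 2 4 + y 1 4 * y 2 3"
definition Mu :: 'r where "Mu = Mb ^ 2 - 4 * Ma * Mc"

definition u123 :: 'r where
  "u123 = - 2 * z 2 3 4 * DM 1 2 1 3 + 2 * z 1 3 4 * DM 1 2 2 3 - 2 * z 1 2 4 * DM 1 3 2 3
          + z 1 2 3 * (DM 1 3 2 4 - DM 1 2 3 4 + DM 1 4 2 3)"
definition u124 :: 'r where
  "u124 = 2 * z 2 3 4 * DM 1 2 1 4 - 2 * z 1 3 4 * DM 1 2 2 4
          + z 1 2 4 * (DM 1 2 3 4 + DM 1 3 2 4 + DM 1 4 2 3) - 2 * z 1 2 3 * DM 1 4 2 4"
definition u134 :: 'r where
  "u134 = 2 * z 2 3 4 * DM 1 3 1 4 + z 1 3 4 * (- DM 1 2 3 4 - DM 1 3 2 4 + DM 1 4 2 3)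
          + 2 * z 1 2 4 * DM 1 3 3 4 - 2 * z 1 2 3 * DM 1 4 3 4"
definition u234 :: 'r where
  "u234 = z 2 3 4 * (- DM 1 2 3 4 + DM 1 3 2 4 - DM 1 4 2 3) - 2 * z 1 3 4 * DM 2 3 2 4
          + 2 * z 1 2 4 * DM 2 3 3 4 - 2 * z 1 2 3 * DM 2 4 3 4"

definition Md1 :: "'r mat" where
  "Md1 = mat_of_rows_list 5 [[- u234 + t * z 2 3 4, - u134 + t * z 1 3 4, - u124 + t * z 1 2 4,
                             - u123 - t * z 1 2 3, - Mu + t ^ 2]]"

definition Md2 :: "'r mat" where
  "Md2 = mat_of_cols_list 5 [
     [- y 1 2 * z 1 3 4 + y 1 3 * z 1 2 4 - y 1 4 * z 1 2 3,
      y 1 2 * z 2 3 4 - y 2 3 * z 1 2 4 + y 2 4 * z 1 2 3,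
      - y 1 3 * z 2 3 4 + y 2 3 * z 1 3 4 - y 3 4 * z 1 2 3,
      - y 1 4 * z 2 3 4 + y 2 4 * z 1 3 4 - y 3 4 * z 1 2 4,
      0],
     [- x 1 2 * z 1 3 4 + x 1 3 * z 1 2 4 - x 1 4 * z 1 2 3,
      x 1 2 * z 2 3 4 - x 2 3 * z 1 2 4 + x 2 4 * z 1 2 3,
      - x 1 3 * z 2 3 4 + x 2 3 * z 1 3 4 - x 3 4 * z 1 2 3,
      - x 1 4 * z 2 3 4 + x 2 4 * z 1 3 4 - x 3 4 * z 1 2 4,
      0],
     [- x 1 2 * y 3 4 + x 3 4 * y 1 2 + x 1 3 * y 2 4 - x 2 4 * y 1 3 - x 1 4 * y 2 3 + x 2 3 * y 1 4 + t,
      - 2 * (x 2 3 * y 2 4 - x 2 4 * y 2 3),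
      2 * (x 2 3 * y 3 4 - x 3 4 * y 2 3),
      2 * (x 2 4 * y 3 4 - x 3 4 * y 2 4),
      - z 2 3 4],
     [2 * (x 1 3 * y 1 4 - x 1 4 * y 1 3),
      - x 1 2 * y 3 4 + x 3 4 * y 1 2 - x 1 3 * y 2 4 + x 2 4 * y 1 3 + x 1 4 * y 2 3 - x 2 3 * y 1 4 + t,
      2 * (x 1 3 * y 3 4 - x 3 4 * y 1 3),
      2 * (x 1 4 * y 3 4 - x 3 4 * y 1 4),
      - z 1 3 4],
     [- 2 * (x 1 2 * y 1 4 - x 1 4 * y 1 2),
      2 * (x 1 2 * y 2 4 - x 2 4 * y 1 2),
      - x 1 2 * y 3 4 + x 3 4 * y 1 2 - x 1 3 * y 2 4 + x 2 4 * y 1 3 - x 1 4 * y 2 3 + x 2 3 * y 1 4 - t,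
      - 2 * (x 1 4 * y 2 4 - x 2 4 * y 1 4),
      z 1 2 4],
     [- 2 * (x 1 2 * y 1 3 - x 1 3 * y 1 2),
      2 * (x 1 2 * y 2 3 - x 2 3 * y 1 2),
      - 2 * (x 1 3 * y 2 3 - x 2 3 * y 1 3),
      x 1 2 * y 3 4 - x 3 4 * y 1 2 - x 1 3 * y 2 4 + x 2 4 * y 1 3 - x 1 4 * y 2 3 + x 2 3 * y 1 4 + t,
      z 1 2 3]]"

definition Md3 :: "'r mat" where
  "Md3 = mat_of_rows_list 2 [
     [x 1 2 * y 3 4 - x 1 3 * y 2 4 + x 1 4 * y 2 3 + x 3 4 * y 1 2 - x 2 4 * y 1 3 + x 2 3 * y 1 4 + t,
      2 * (x 1 2 * x 3 4 - x 1 3 * x 2 4 + x 1 4 * x 2 3)],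
     [- 2 * (y 1 2 * y 3 4 - y 1 3 * y 2 4 + y 1 4 * y 2 3),
      - x 1 2 * y 3 4 + x 1 3 * y 2 4 - x 1 4 * y 2 3 - x 3 4 * y 1 2 + x 2 4 * y 1 3 - x 2 3 * y 1 4 + t],
     [- (- y 1 2 * z 1 3 4 + y 1 3 * z 1 2 4 - y 1 4 * z 1 2 3),
      - (- x 1 2 * z 1 3 4 + x 1 3 * z 1 2 4 - x 1 4 * z 1 2 3)],
     [- y 1 2 * z 2 3 4 + y 2 3 * z 1 2 4 - y 2 4 * z 1 2 3,
      - x 1 2 * z 2 3 4 + x 2 3 * z 1 2 4 - x 2 4 * z 1 2 3],
     [- y 1 3 * z 2 3 4 + y 2 3 * z 1 3 4 - y 3 4 * z 1 2 3,
      - x 1 3 * z 2 3 4 + x 2 3 * z 1 3 4 - x 3 4 * z 1 2 3],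
     [- (- y 1 4 * z 2 3 4 + y 2 4 * z 1 3 4 - y 3 4 * z 1 2 4),
      - (- x 1 4 * z 2 3 4 + x 2 4 * z 1 3 4 - x 3 4 * z 1 2 4)]]"

end

definition QQ1 :: "(qvar, 'a::comm_ring_1) mpoly mat" where
  "QQ1 = Qd1 (\<lambda>i j. PVar (qa i j)) (\<lambda>i j. PVar (ql i j)) (\<lambda>i j. PVar (qpsi i j)) (PVar Z1) (PVar Z2)"
definition QQ2 :: "(qvar, 'a::comm_ring_1) mpoly mat" where
  "QQ2 = Qd2 (\<lambda>i j. PVar (qa i j)) (\<lambda>i j. PVar (ql i j)) (\<lambda>i j. PVar (qpsi i j)) (PVar Z1) (PVar Z2)"
definition QQ3 :: "(qvar, 'a::comm_ring_1) mpoly mat" where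
  "QQ3 = Qd3 (\<lambda>i j. PVar (qa i j)) (\<lambda>i j. PVar (ql i j)) (\<lambda>i j. PVar (qpsi i j)) (PVar Z1) (PVar Z2)"

definition MM1 :: "(mvar, 'a::comm_ring_1) mpoly mat" where
  "MM1 = Md1 (\<lambda>i j. PVar (mx i j)) (\<lambda>i j. PVar (my i j)) (\<lambda>i j k. PVar (mz i j k)) (PVar T)"
definition MM2 :: "(mvar, 'a::comm_ring_1) mpoly mat" where
  "MM2 = Md2 (\<lambda>i j. PVar (mx i j)) (\<lambda>i j. PVar (my i j)) (\<lambda>i j k. PVar (mz i j k)) (PVar T)"
definition MM3 :: "(mvar, 'a::comm_ring_1) mpoly mat" where
  "MM3 = Md3 (\<lambda>i j. PVar (mx i j)) (\<lambda>i j. PVar (my i j)) (\<lambda>i j k. PVar (mz i j k)) (PVar T)"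

text \<open>Complex 0 -> R^n3 --d3--> R^n2 --d2--> R^n1 --d1--> R^n0 (maps as matrices acting on
  column vectors).\<close>
definition complex3_iso :: "'r::comm_ring_1 mat \<Rightarrow> 'r mat \<Rightarrow> 'r mat \<Rightarrow> 'r mat \<Rightarrow> 'r mat \<Rightarrow> 'r mat \<Rightarrow> bool" where
  "complex3_iso d1 d2 d3 e1 e2 e3 \<longleftrightarrow>
     (\<exists>U0 U1 U2 U3.
        U0 \<in> carrier_mat (dim_row e1) (dim_row d1) \<and> U1 \<in> carrier_mat (dim_col e1) (dim_col d1) \<and>
        U2 \<in> carrier_mat (dim_col e2) (dim_col d2) \<and> U3 \<in> carrier_mat (dim_col e3) (dim_col d3) \<and>
        invertible_mat U0 \<and> invertible_mat U1 \<and> invertible_mat U2 \<and> invertible_mat U3 \<and>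
        U0 * d1 = e1 * U1 \<and> U1 * d2 = e2 * U2 \<and> U2 * d3 = e3 * U3)"

end

theory Submission
  imports Defs
begin


definition monev :: "('v \<Rightarrow> 'b::comm_ring_1) \<Rightarrow> ('v \<Rightarrow>\<^sub>0 nat) \<Rightarrow> 'b" where
  "monev \<sigma> m = (\<Prod>v\<in>Poly_Mapping.keys m. \<sigma> v ^ Poly_Mapping.lookup m v)"

definition peval :: "('v \<Rightarrow> ('w,'a::comm_ring_1) mpoly) \<Rightarrow> ('v,'a) mpoly \<Rightarrow> ('w,'a) mpoly" where
  "peval \<sigma> p = (\<Sum>m\<in>Poly_Mapping.keys p. PConst (Poly_Mapping.lookup p m) * monev \<sigma> m)"

lemma monev_superset:
  assumes "finite S" "Poly_Mapping.keys m \<subseteq> S"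
  shows "monev \<sigma> m = (\<Prod>v\<in>S. \<sigma> v ^ Poly_Mapping.lookup m v)"
  unfolding monev_def
  by (rule prod.mono_neutral_left) (use assms in \<open>auto simp: in_keys_iff\<close>)

lemma monev_add: "monev \<sigma> (m + n) = monev \<sigma> m * monev \<sigma> n"
proof -
  let ?S = "Poly_Mapping.keys m \<union> Poly_Mapping.keys n"
  have f: "finite ?S" by simp
  have k: "Poly_Mapping.keys (m + n) \<subseteq> ?S" by (rule keys_add)
  have km: "Poly_Mapping.keys m \<subseteq> ?S" and kn: "Poly_Mapping.keys n \<subseteq> ?S" by auto
  show ?thesis
    unfolding monev_superset[OF f k] monev_superset[OF f km] monev_superset[OF f kn]
    by (simp add: lookup_add power_add prod.distrib)
qed

lemma monev_zero[simp]: "monev \<sigma> 0 = 1"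
  by (simp add: monev_def)

lemma monev_single: "monev \<sigma> (Poly_Mapping.single v 1) = \<sigma> v"
  unfolding monev_def by simp

lemma PConst_zero[simp]: "PConst 0 = 0" by (simp add: PConst_def)
lemma PConst_one[simp]: "PConst 1 = 1" by (simp add: PConst_def)
lemma PConst_add: "PConst (a + b) = PConst a + PConst b" by (simp add: PConst_def single_add)
lemma PConst_mult: "PConst (a * b) = PConst a * PConst b" by (simp add: PConst_def mult_single)

lemma peval_superset:
  assumes "finite S" "Poly_Mapping.keys p \<subseteq> S"
  shows "peval \<sigma> p = (\<Sum>m\<in>S. PConst (Poly_Mapping.lookup p m) * monev \<sigma> m)"
  unfolding peval_def
  by (rule sum.mono_neutral_left) (use assms in \<open>auto simp: in_keys_iff\<close>)

lemma peval_zero[simp]: "peval \<sigma> 0 = 0" by (simp add: peval_def)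

lemma peval_add: "peval \<sigma> (p + q) = peval \<sigma> p + peval \<sigma> q"
proof -
  let ?S = "Poly_Mapping.keys p \<union> Poly_Mapping.keys q"
  have f: "finite ?S" by simp
  have k: "Poly_Mapping.keys (p + q) \<subseteq> ?S" by (rule keys_add)
  have kp: "Poly_Mapping.keys p \<subseteq> ?S" and kq: "Poly_Mapping.keys q \<subseteq> ?S" by auto
  show ?thesis
    unfolding peval_superset[OF f k] peval_superset[OF f kp] peval_superset[OF f kq]
    by (simp add: lookup_add PConst_add distrib_right sum.distrib)
qed

lemma peval_single: "peval \<sigma> (Poly_Mapping.single m c) = PConst c * monev \<sigma> m"
proof -
  have "peval \<sigma> (Poly_Mapping.single m c) = (\<Sum>m'\<in>{m}. PConst (Poly_Mapping.lookup (Poly_Mapping.single m c) m') * monev \<sigma> m')"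
    by (rule peval_superset) auto
  then show ?thesis by simp
qed

lemma peval_sum: "peval \<sigma> (sum f S) = (\<Sum>x\<in>S. peval \<sigma> (f x))"
  by (induction S rule: infinite_finite_induct) (auto simp: peval_add)

lemma pm_decomp: "(p :: 'k \<Rightarrow>\<^sub>0 'b::comm_monoid_add) = (\<Sum>m\<in>Poly_Mapping.keys p. Poly_Mapping.single m (Poly_Mapping.lookup p m))"
proof (rule poly_mapping_eqI)
  fix k
  have "Poly_Mapping.lookup (\<Sum>m\<in>Poly_Mapping.keys p. Poly_Mapping.single m (Poly_Mapping.lookup p m)) k
     = (\<Sum>m\<in>Poly_Mapping.keys p. (if m = k then Poly_Mapping.lookup p m else 0))"
    by (simp add: lookup_sum lookup_single when_def)
  also have "\<dots> = Poly_Mapping.lookup p k"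
    by (simp add: sum.delta' in_keys_iff)
  finally show "Poly_Mapping.lookup p k = Poly_Mapping.lookup (\<Sum>m\<in>Poly_Mapping.keys p. Poly_Mapping.single m (Poly_Mapping.lookup p m)) k" by simp
qed

lemma peval_mult: "peval \<sigma> (p * q) = peval \<sigma> p * peval \<sigma> q"
proof -
  have "p * q = (\<Sum>m\<in>Poly_Mapping.keys p. Poly_Mapping.single m (Poly_Mapping.lookup p m)) *
                (\<Sum>n\<in>Poly_Mapping.keys q. Poly_Mapping.single n (Poly_Mapping.lookup q n))"
    using pm_decomp[of p] pm_decomp[of q] by simp
  also have "\<dots> = (\<Sum>m\<in>Poly_Mapping.keys p. \<Sum>n\<in>Poly_Mapping.keys q.
        Poly_Mapping.single (m + n) (Poly_Mapping.lookup p m * Poly_Mapping.lookup q n))"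
    by (simp add: sum_product mult_single)
  finally have "peval \<sigma> (p * q) = (\<Sum>m\<in>Poly_Mapping.keys p. \<Sum>n\<in>Poly_Mapping.keys q.
        PConst (Poly_Mapping.lookup p m) * monev \<sigma> m * (PConst (Poly_Mapping.lookup q n) * monev \<sigma> n))"
    by (simp add: peval_sum peval_single monev_add PConst_mult ac_simps)
  also have "\<dots> = peval \<sigma> p * peval \<sigma> q"
    unfolding peval_def by (simp add: sum_product)
  finally show ?thesis .
qed

lemma peval_one: "peval \<sigma> 1 = 1"
proof -
  have "1 = Poly_Mapping.single 0 1" by simp
  then show ?thesis by (metis peval_single monev_zero PConst_one mult_1)
qed

lemma peval_PConst: "peval \<sigma> (PConst c) = PConst c"
  unfolding PConst_def by (simp add: peval_single PConst_def)

lemma peval_PVar: "peval \<sigma> (PVar v) = \<sigma> v"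
  unfolding PVar_def peval_single monev_single by simp

lemma peval_hom: "comm_ring_hom (peval \<sigma>)"
  by unfold_locales (simp_all add: peval_add peval_mult peval_one)

lemma peval_R0: "R0_alg_hom (peval \<sigma>)"
  unfolding R0_alg_hom_def by (simp add: peval_add peval_mult peval_one peval_PConst)

lemma hom_peval:
  assumes "comm_ring_hom f" "\<And>c. f (PConst c) = PConst c"
  shows "f (peval \<tau> q) = peval (f \<circ> \<tau>) q"
proof -
  interpret comm_ring_hom f by fact
  show ?thesis unfolding peval_def monev_def
    by (simp add: hom_distribs assms(2))
qed

lemma PVar_power: "PVar v ^ k = Poly_Mapping.single (Poly_Mapping.single v k) 1"
proof (induction k)
  case 0 then show ?case by simp
next
  case (Suc k) then show ?case
    by (simp add: PVar_def mult_single single_add[symmetric])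
qed

lemma prod_single_one: "(\<Prod>v\<in>S. Poly_Mapping.single (g v) (1::'b::comm_semiring_1)) = Poly_Mapping.single (\<Sum>v\<in>S. g v) 1"
  by (induction S rule: infinite_finite_induct) (auto simp: mult_single)

lemma peval_PVar_id: "peval PVar q = q"
proof -
  have m: "monev PVar m = Poly_Mapping.single m 1" for m :: "'v \<Rightarrow>\<^sub>0 nat"
    unfolding monev_def PVar_power prod_single_one using pm_decomp[of m] by simp
  have "peval PVar q = (\<Sum>m\<in>Poly_Mapping.keys q. Poly_Mapping.single m (Poly_Mapping.lookup q m))"
    unfolding peval_def m by (simp add: PConst_def mult_single)
  also have "\<dots> = q" using pm_decomp[of q] by simp
  finally show ?thesis .
qed



fun sig :: "qvar \<Rightarrow> (mvar,'a::comm_ring_1) mpoly" where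
  "sig A11 = PVar X12" | "sig A12 = PVar X13" | "sig A13 = PVar X14"
| "sig A21 = PVar Y12" | "sig A22 = PVar Y13" | "sig A23 = PVar Y14"
| "sig L11 = 2 * PVar X34" | "sig L12 = - 2 * PVar X24" | "sig L13 = 2 * PVar X23"
| "sig L21 = 2 * PVar Y34" | "sig L22 = - 2 * PVar Y24" | "sig L23 = 2 * PVar Y23"
| "sig Psi12 = PVar Z123" | "sig Psi13 = PVar Z124" | "sig Psi23 = PVar Z134"
| "sig Z2 = 2 * PVar Z234"
| "sig Z1 = PVar T + PVar X34 * PVar Y12 - PVar X24 * PVar Y13 + PVar X23 * PVar Y14
     - PVar X14 * PVar Y23 + PVar X13 * PVar Y24 - PVar X12 * PVar Y34"

lemma map_mat_rows_list:
  assumes "\<forall>r\<in>set rs. length r = nc"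
  shows "map_mat f (mat_of_rows_list nc rs) = mat_of_rows_list nc (map (map f) rs)"
  using assms by (auto simp: mat_of_rows_list_def intro!: eq_matI)

lemma map_mat_cols_list:
  assumes "\<forall>r\<in>set cs. length r = nr"
  shows "map_mat f (mat_of_cols_list nr cs) = mat_of_cols_list nr (map (map f) cs)"
  using assms by (auto simp: mat_of_cols_list_def intro!: eq_matI)

lemma sum3: "sum f {1..3::nat} = f 1 + f 2 + f 3"
  by (simp add: numeral_3_eq_3 eval_nat_numeral)

context comm_ring_hom
begin
lemma Qd1_hom: "map_mat hom (Qd1 a l p z1 z2) = Qd1 (\<lambda>i j. hom (a i j)) (\<lambda>i j. hom (l i j)) (\<lambda>i j. hom (p i j)) (hom z1) (hom z2)"
  unfolding Qd1_def
  by (subst map_mat_rows_list) (simp_all add: hom_distribs NQ_def PAv_def ALt_def det3_def sum3)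
lemma Qd2_hom: "map_mat hom (Qd2 a l p z1 z2) = Qd2 (\<lambda>i j. hom (a i j)) (\<lambda>i j. hom (l i j)) (\<lambda>i j. hom (p i j)) (hom z1) (hom z2)"
  unfolding Qd2_def
  by (subst map_mat_cols_list) (simp_all add: hom_distribs)
lemma Qd3_hom: "map_mat hom (Qd3 a l p z1 z2) = Qd3 (\<lambda>i j. hom (a i j)) (\<lambda>i j. hom (l i j)) (\<lambda>i j. hom (p i j)) (hom z1) (hom z2)"
  unfolding Qd3_def
  by (subst map_mat_rows_list) (simp_all add: hom_distribs)
end



definition U1m :: "(mvar,'a::comm_ring_1) mpoly mat" where
  "U1m = mat_of_rows_list 5 [[-2,0,0,0,0],[0,1,0,0,0],[0,0,-1,0,0],[0,0,0,-1,0],[0,0,0,0,-1]]"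
definition U2m :: "(mvar,'a::comm_ring_1) mpoly mat" where
  "U2m = mat_of_rows_list 6 [[2,0,0,0,0,0],[0,-2,0,0,0,0],[0,0,-2,0,0,0],[0,0,0,-1,0,0],[0,0,0,0,-1,0],[0,0,0,0,0,1]]"
definition U3m :: "(mvar,'a::comm_ring_1) mpoly mat" where
  "U3m = mat_of_rows_list 2 [[0,2],[2,0]]"

lemma less5: "(j::nat) < 5 \<longleftrightarrow> j = 0 \<or> j = 1 \<or> j = 2 \<or> j = 3 \<or> j = 4" by auto
lemma less6: "(j::nat) < 6 \<longleftrightarrow> j = 0 \<or> j = 1 \<or> j = 2 \<or> j = 3 \<or> j = 4 \<or> j = 5" by auto
lemma less2: "(j::nat) < 2 \<longleftrightarrow> j = 0 \<or> j = 1" by auto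
lemma sum5: "sum f {0..<5::nat} = f 0 + f 1 + f 2 + f 3 + f 4" by (simp add: eval_nat_numeral)
lemma sum6: "sum f {0..<6::nat} = f 0 + f 1 + f 2 + f 3 + f 4 + f 5" by (simp add: eval_nat_numeral)
lemma sum2: "sum f {0..<2::nat} = f 0 + f 1" by (simp add: eval_nat_numeral)

abbreviation "sA \<equiv> (\<lambda>i j. sig (qa i j))"
abbreviation "sL \<equiv> (\<lambda>i j. sig (ql i j))"
abbreviation "sP \<equiv> (\<lambda>i j. sig (qpsi i j))"

lemma eq1: "Qd1 sA sL sP (sig Z1) (sig Z2) = (MM1 :: (mvar,'a::comm_ring_1) mpoly mat) * U1m"
  unfolding Qd1_def NQ_def ALt_def PAv_def det3_def sum3
  apply (rule eq_matI)
    apply (simp_all add:  MM1_def Md1_def U1m_def mat_of_rows_list_def less5 sum5 scalar_prod_def)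
  apply (elim disjE)
      apply (simp_all add: qa_def ql_def qpsi_def mx_def my_def mz_def NQ_def PAv_def ALt_def det3_def sum3
      u123_def u124_def u134_def u234_def DM_def Mu_def Ma_def Mb_def Mc_def)
  by (simp_all add: algebra_simps power2_eq_square)

lemma eq2: "U1m * Qd2 sA sL sP (sig Z1) (sig Z2) = (MM2 :: (mvar,'a::comm_ring_1) mpoly mat) * U2m"
  unfolding Qd2_def
  apply (rule eq_matI)
    apply (simp_all add: MM2_def Md2_def U1m_def U2m_def mat_of_rows_list_def mat_of_cols_list_def less5 less6 sum5 sum6 scalar_prod_def)
  apply (elim disjE)
      apply (simp_all add: qa_def ql_def qpsi_def mx_def my_def mz_def scalar_prod_def sum2 sum5 sum6)
  done

lemma eq3: "U2m * Qd3 sA sL sP (sig Z1) (sig Z2) = (MM3 :: (mvar,'a::comm_ring_1) mpoly mat) * U3m"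
  unfolding Qd3_def
  apply (rule eq_matI)
    apply (simp_all add: MM3_def Md3_def U2m_def U3m_def mat_of_rows_list_def less2 less6 sum2 sum6 scalar_prod_def)
  apply (auto simp: qa_def ql_def qpsi_def mx_def my_def mz_def scalar_prod_def sum2 sum5 sum6 less2 less6 less_Suc_eq)
  done



fun tau :: "'a \<Rightarrow> mvar \<Rightarrow> (qvar,'a::comm_ring_1) mpoly" where
  "tau h X12 = PVar A11" | "tau h X13 = PVar A12" | "tau h X14 = PVar A13"
| "tau h Y12 = PVar A21" | "tau h Y13 = PVar A22" | "tau h Y14 = PVar A23"
| "tau h X34 = PConst h * PVar L11" | "tau h X24 = - (PConst h * PVar L12)" | "tau h X23 = PConst h * PVar L13"
| "tau h Y34 = PConst h * PVar L21" | "tau h Y24 = - (PConst h * PVar L22)" | "tau h Y23 = PConst h * PVar L23"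
| "tau h Z123 = PVar Psi12" | "tau h Z124 = PVar Psi13" | "tau h Z134 = PVar Psi23"
| "tau h Z234 = PConst h * PVar Z2"
| "tau h T = PVar Z1 - PConst h * (PVar L11 * PVar A21 + PVar L12 * PVar A22 + PVar L13 * PVar A23
      - PVar A13 * PVar L23 - PVar A12 * PVar L22 - PVar A11 * PVar L21)"

lemma PConst_half:
  assumes "2 * h = (1::'a::comm_ring_1)"
  shows "2 * PConst h = (1 :: ('v,'a) mpoly)" "PConst h * 2 = (1 :: ('v,'a) mpoly)"
proof -
  have "(2 :: ('v,'a) mpoly) = PConst 2" by (simp add: PConst_def)
  then have "2 * PConst h = (PConst (2*h) :: ('v,'a) mpoly)" by (simp add: PConst_mult)
  then show "2 * PConst h = (1 :: ('v,'a) mpoly)" using assms by simp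
  then show "PConst h * 2 = (1 :: ('v,'a) mpoly)" by (simp add: mult.commute)
qed

lemma sig_tau:
  assumes "2 * h = (1::'a::comm_ring_1)"
  shows "peval sig (tau h w) = (PVar w :: (mvar,'a) mpoly)"
proof -
  interpret comm_ring_hom "peval sig :: (qvar,'a) mpoly \<Rightarrow> (mvar,'a) mpoly" by (rule peval_hom)
  note H = PConst_half[OF assms, where 'v = mvar]
  have H': "PConst h * (2 * x) = x" for x :: "(mvar,'a) mpoly"
    by (metis H(2) mult.assoc mult_1)
  show ?thesis
  proof (cases w)
    case T
    have "peval sig (tau h w) = PVar T + (PVar X34 * PVar Y12 - PVar X24 * PVar Y13 + PVar X23 * PVar Y14
     - PVar X14 * PVar Y23 + PVar X13 * PVar Y24 - PVar X12 * PVar Y34)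
      - PConst h * (2 * (PVar X34 * PVar Y12 - PVar X24 * PVar Y13 + PVar X23 * PVar Y14
     - PVar X14 * PVar Y23 + PVar X13 * PVar Y24 - PVar X12 * PVar Y34))"
      using T by (simp add: hom_distribs peval_PVar peval_PConst algebra_simps)
    also have "\<dots> = PVar w" unfolding H' using T by simp
    finally show ?thesis .
  qed (simp_all add: hom_distribs peval_PVar peval_PConst H' mult.assoc[symmetric] H
                     mult_minus_right[symmetric] del: mult_minus_right)
qed

lemma surj_sig: assumes "2 * h = (1::'a::comm_ring_1)"
  shows "surj (peval sig :: (qvar,'a) mpoly \<Rightarrow> (mvar,'a) mpoly)"
proof (rule surjI)
  fix q :: "(mvar,'a) mpoly"
  have "peval sig (peval (tau h) q) = peval (peval sig \<circ> tau h) q"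
    by (rule hom_peval[OF peval_hom peval_PConst])
  also have "peval sig \<circ> tau h = PVar" using sig_tau[OF assms] by (auto simp: fun_eq_iff)
  finally show "peval sig (peval (tau h) q) = q" by (simp add: peval_PVar_id)
qed



lemma inv_U1: assumes "2 * PConst h = (1::(mvar,'a::comm_ring_1) mpoly)" "PConst h * 2 = (1::(mvar,'a) mpoly)"
  shows "invertible_mat (U1m :: (mvar,'a) mpoly mat)"
proof -
  let ?V = "mat_of_rows_list 5 [[- PConst h,0,0,0,0],[0,1,0,0,0],[0,0,-1,0,0],[0,0,0,-1,0],[0,0,0,0,-1]] :: (mvar,'a) mpoly mat"
  have "inverts_mat U1m ?V" "inverts_mat ?V U1m"
    unfolding inverts_mat_def U1m_def
    by (rule eq_matI; auto simp: mat_of_rows_list_def scalar_prod_def sum5 less_Suc_eq assms)+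
  then show ?thesis unfolding invertible_mat_def by (auto simp: U1m_def mat_of_rows_list_def square_mat.simps)
qed

lemma inv_U2: assumes "2 * PConst h = (1::(mvar,'a::comm_ring_1) mpoly)" "PConst h * 2 = (1::(mvar,'a) mpoly)"
  shows "invertible_mat (U2m :: (mvar,'a) mpoly mat)"
proof -
  let ?V = "mat_of_rows_list 6 [[PConst h,0,0,0,0,0],[0,- PConst h,0,0,0,0],[0,0,- PConst h,0,0,0],[0,0,0,-1,0,0],[0,0,0,0,-1,0],[0,0,0,0,0,1]] :: (mvar,'a) mpoly mat"
  have "inverts_mat U2m ?V" "inverts_mat ?V U2m"
    unfolding inverts_mat_def U2m_def
    by (rule eq_matI; auto simp: mat_of_rows_list_def scalar_prod_def sum6 less_Suc_eq assms)+
  then show ?thesis unfolding invertible_mat_def by (auto simp: U2m_def mat_of_rows_list_def square_mat.simps)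
qed

lemma inv_U3: assumes "2 * PConst h = (1::(mvar,'a::comm_ring_1) mpoly)" "PConst h * 2 = (1::(mvar,'a) mpoly)"
  shows "invertible_mat (U3m :: (mvar,'a) mpoly mat)"
proof -
  let ?V = "mat_of_rows_list 2 [[0, PConst h],[PConst h, 0]] :: (mvar,'a) mpoly mat"
  have "inverts_mat U3m ?V" "inverts_mat ?V U3m"
    unfolding inverts_mat_def U3m_def
    by (rule eq_matI; auto simp: mat_of_rows_list_def scalar_prod_def sum2 less_Suc_eq assms)+
  then show ?thesis unfolding invertible_mat_def by (auto simp: U3m_def mat_of_rows_list_def square_mat.simps)
qed

lemma U1c: "U1m \<in> carrier_mat 5 5"
  unfolding U1m_def carrier_mat_def mat_of_rows_list_def by (simp add: eval_nat_numeral)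

lemma U2c: "U2m \<in> carrier_mat 6 6"
  unfolding U2m_def carrier_mat_def mat_of_rows_list_def by (simp add: eval_nat_numeral)

lemma U3c: "U3m \<in> carrier_mat 2 2"
  unfolding U3m_def carrier_mat_def mat_of_rows_list_def by (simp add: eval_nat_numeral)

lemma inv_one: "invertible_mat (1\<^sub>m n :: 'b::semiring_1 mat)"
  unfolding invertible_mat_def inverts_mat_def by (auto intro!: exI[of _ "1\<^sub>m n"])

theorem theorem4p5:
  assumes "noetherian_ring TYPE('a::comm_ring_1)"
    and "(2::'a) dvd 1"
  shows "\<exists>\<mu> :: (qvar, 'a) mpoly \<Rightarrow> (mvar, 'a) mpoly.
           R0_alg_hom \<mu> \<and> surj \<mu> \<and>
           complex3_iso (map_mat \<mu> QQ1) (map_mat \<mu> QQ2) (map_mat \<mu> QQ3) MM1 MM2 MM3"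
proof -
  from assms(2) obtain h :: 'a where h: "2 * h = 1" by (metis dvd_def)
  note H = PConst_half[OF h, where 'v = mvar]
  let ?mu = "peval sig :: (qvar, 'a) mpoly \<Rightarrow> (mvar, 'a) mpoly"
  interpret comm_ring_hom ?mu by (rule peval_hom)
  have m1: "map_mat ?mu QQ1 = Qd1 sA sL sP (sig Z1) (sig Z2)"
    unfolding QQ1_def Qd1_hom by (simp add: peval_PVar)
  have m2: "map_mat ?mu QQ2 = Qd2 sA sL sP (sig Z1) (sig Z2)"
    unfolding QQ2_def Qd2_hom by (simp add: peval_PVar)
  have m3: "map_mat ?mu QQ3 = Qd3 sA sL sP (sig Z1) (sig Z2)"
    unfolding QQ3_def Qd3_hom by (simp add: peval_PVar)
  have "complex3_iso (map_mat ?mu QQ1) (map_mat ?mu QQ2) (map_mat ?mu QQ3) MM1 MM2 MM3"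
    unfolding complex3_iso_def m1 m2 m3
  proof (intro exI conjI)
    show "1\<^sub>m 1 \<in> carrier_mat (dim_row (MM1 :: (mvar,'a) mpoly mat)) (dim_row (Qd1 sA sL sP (sig Z1) (sig Z2) :: (mvar,'a) mpoly mat))"
      by (simp add: MM1_def Md1_def Qd1_def mat_of_rows_list_def)
    show "U1m \<in> carrier_mat (dim_col (MM1 :: (mvar,'a) mpoly mat)) (dim_col (Qd1 sA sL sP (sig Z1) (sig Z2) :: (mvar,'a) mpoly mat))"
      using U1c by (simp add: MM1_def Md1_def Qd1_def mat_of_rows_list_def)
    show "U2m \<in> carrier_mat (dim_col (MM2 :: (mvar,'a) mpoly mat)) (dim_col (Qd2 sA sL sP (sig Z1) (sig Z2) :: (mvar,'a) mpoly mat))"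
      using U2c by (simp add: MM2_def Md2_def Qd2_def mat_of_rows_list_def mat_of_cols_list_def numeral_eq_Suc)
    show "U3m \<in> carrier_mat (dim_col (MM3 :: (mvar,'a) mpoly mat)) (dim_col (Qd3 sA sL sP (sig Z1) (sig Z2) :: (mvar,'a) mpoly mat))"
      using U3c by (simp add: MM3_def Md3_def Qd3_def mat_of_rows_list_def numeral_eq_Suc)
    show "invertible_mat (1\<^sub>m 1 :: (mvar,'a) mpoly mat)" by (rule inv_one)
    show "invertible_mat (U1m :: (mvar,'a) mpoly mat)" by (rule inv_U1[OF H])
    show "invertible_mat (U2m :: (mvar,'a) mpoly mat)" by (rule inv_U2[OF H])
    show "invertible_mat (U3m :: (mvar,'a) mpoly mat)" by (rule inv_U3[OF H])
    show "1\<^sub>m 1 * Qd1 sA sL sP (sig Z1) (sig Z2) = (MM1 :: (mvar,'a) mpoly mat) * U1m"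
    proof -
      have d: "dim_row (Qd1 sA sL sP (sig Z1) (sig Z2) :: (mvar,'a) mpoly mat) = 1"
        by (simp add: Qd1_def mat_of_rows_list_def)
      show ?thesis by (subst left_mult_one_mat'[OF d]) (rule eq1)
    qed
    show "U1m * Qd2 sA sL sP (sig Z1) (sig Z2) = (MM2 :: (mvar,'a) mpoly mat) * U2m" by (rule eq2)
    show "U2m * Qd3 sA sL sP (sig Z1) (sig Z2) = (MM3 :: (mvar,'a) mpoly mat) * U3m" by (rule eq3)
  qed
  then show ?thesis using peval_R0 surj_sig[OF h] by blast
qed

end
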